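(* Let $d$ be a positive even integer, $n=\frac{d^2}{2}$, and $P_m(x)=1+x+\cdots+x^{m-1}\in\mathbb{F}_2[x]$. Then: (1) $P_{d+1}(x)$ is invertible modulo $x^n-1$, with $$P_{d+1}(x)^{-1}\equiv x\big(1+x^{d+1}+x^{2(d+1)}+\cdots+x^{(\frac d2-1)(d+1)}\big)+x^{\frac d2+1}\big(1+x^{d+1}+\cdots+x^{(\frac d2-2)(d+1)}\big)\pmod{x^n-1},$$ and $\mathrm{wt}(P_{d+1}(x)^{-1})=d-1$. (2) Modulo $x^n-1$, $$P_n(x)\equiv P_{d+1}(x)\,x^{\frac d2+1}\big(1+x^{d+1}+\cdots+x^{(\frac d2-2)(d+1)}\big)+\big(1+x+x^2+\cdots+x^{\frac d2}\big)$$ and $$P_n(x)\equiv P_{d+1}(x)^{-1}\big(1+x+\cdots+x^{\frac d2-1}\big)+\big(1+x^{d+1}+x^{2(d+1)}+\cdots+x^{(\frac d2-1)(d+1)}\big).$$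
   Context: Weight is the number of nonzero coefficients of the representative of degree $<n$; an empty sum is $0$. *)

theory Defs
  imports "HOL-Library.Z2" "HOL-Computational_Algebra.Polynomial"
begin

definition Pm :: "nat \<Rightarrow> bit poly" where
  "Pm m = (\<Sum>i<m. monom 1 i)"

definition geom :: "nat \<Rightarrow> nat \<Rightarrow> bit poly" where
  "geom a k = (\<Sum>j<k. monom 1 (j * a))"

definition xn1 :: "nat \<Rightarrow> bit poly" where
  "xn1 n = monom 1 n - 1"

definition wt :: "nat \<Rightarrow> bit poly \<Rightarrow> nat" where
  "wt n f = card {i. coeff (f mod xn1 n) i \<noteq> 0}"

end

theory Submission
  imports Defs
begin
abbreviation X :: "bit poly" where "X \<equiv> [:0,1:]"
lemma two_bp: "(2::bit poly) = 0"
  by (metis bit_2_eq_0 of_nat_numeral of_nat_poly pCons_0_0 numeral_2_eq_2)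
lemma monomX: "monom (1::bit) i = X ^ i" by (simp add: monom_altdef)
lemma Pm_Suc: "Pm (Suc m) = Pm m + X ^ m" by (simp add: Pm_def monomX)
lemma Pm_0: "Pm 0 = 0" by (simp add: Pm_def)
lemma L1: "(1 + X) * Pm m = 1 + X ^ m"
proof (induction m)
  case 0 show ?case by (simp add: Pm_0 two_bp)
next
  case (Suc m)
  have "(1 + X) * Pm (Suc m) = 1 + X^m + (1+X)*X^m" using Suc by (simp add: Pm_Suc algebra_simps)
  also have "\<dots> = 1 + X^Suc m + 2 * X^m" by (simp add: algebra_simps)
  finally show ?case by (simp add: two_bp)
qed
lemma geom_Suc: "geom a (Suc k) = geom a k + X^(k*a)" by (simp add: geom_def monomX)
lemma L2: "(1 + X^a) * geom a k = 1 + X^(a*k)"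
proof (induction k)
  case 0 show ?case by (simp add: geom_def two_bp)
next
  case (Suc k)
  have "(1 + X^a) * geom a (Suc k) = 1 + X^(a*k) + (1+X^a)*X^(a*k)" using Suc by (simp add: geom_Suc algebra_simps)
  also have "\<dots> = 1 + X^(a*Suc k) + 2 * X^(a*k)" by (simp add: algebra_simps power_add)
  finally show ?case by (simp add: two_bp)
qed
lemma L3: "Pm (p + q) = Pm p + X^p * Pm q"
  by (induction q) (simp_all add: Pm_0 Pm_Suc algebra_simps power_add)
lemma L4: "Pm (a*k) = Pm a * geom a k"
proof (induction k)
  case 0 show ?case by (simp add: Pm_0 geom_def)
next
  case (Suc k)
  have "Pm (a * Suc k) = Pm (a*k + a)" by (simp add: add.commute)
  also have "\<dots> = Pm a * geom a k + X^(a*k) * Pm a" by (simp add: L3 Suc)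
  finally show ?case by (simp add: geom_Suc algebra_simps mult.commute[of k a])
qed

lemma char2: "(p::bit poly) - q = p + q" by (simp add: poly_eq_iff)
lemma selfadd: "(p::bit poly) + p = 0"
  by (metis two_bp mult_2 mult_zero_left)
lemma xn1_eq: "xn1 n = 1 + X^n" by (simp add: xn1_def char2 monomX add.commute)

lemma nzX: "(1 + X) \<noteq> 0"
proof
  assume h: "1 + X = 0"
  have "coeff (1 + X) 1 = coeff 0 1" by (simp only: h)
  then show False by simp
qed

lemma partA:
  assumes "k = Suc j" "a = 2*k+1" "n = 2*k*k"
  shows "Pm a * (X * geom a k + X^(k+1) * geom a j) = 1 + (1 + X^n) * Pm (k+1)"
proof -
  have e1: "a*k = n + k" and e2: "k+1+a*j = n" using assms by (simp_all add: algebra_simps)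
  have "(1+X) * (Pm a * (X * geom a k + X^(k+1) * geom a j))
      = X * (((1+X) * Pm a) * geom a k) + X^(k+1) * (((1+X) * Pm a) * geom a j)"
    by (simp add: algebra_simps)
  also have "\<dots> = X * ((1+X^a) * geom a k) + X^(k+1) * ((1+X^a) * geom a j)" by (simp only: L1)
  also have "\<dots> = X * (1 + X^(a*k)) + X^(k+1) * (1 + X^(a*j))" by (simp add: L2)
  also have "\<dots> = X + X^n * X^(k+1) + X^(k+1) + X^n"
  proof -
    have "X * X^(a*k) = X^n * X^(k+1)" using e1 by (simp add: power_add[symmetric])
    moreover have "X^(k+1) * X^(a*j) = X^n" by (simp only: power_add[symmetric] e2)
    ultimately show ?thesis by (simp add: distrib_left)
  qed
  also have "\<dots> = 2 + (X + X^n * X^(k+1) + X^(k+1) + X^n)" by (simp add: two_bp)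
  also have "\<dots> = (1+X) + (1+X^n)*(1+X^(k+1))" by (simp add: algebra_simps)
  also have "\<dots> = (1+X) + (1+X^n)*((1+X)*Pm (k+1))" by (simp only: L1)
  also have "\<dots> = (1+X) * (1 + (1 + X^n) * Pm (k+1))" by (simp add: algebra_simps)
  finally show ?thesis by (rule mult_left_cancel[OF nzX, THEN iffD1])
qed

lemma partB:
  assumes "k = Suc j" "a = 2*k+1" "n = 2*k*k"
  shows "Pm n = Pm a * X^(k+1) * geom a j + Pm (k+1)"
proof -
  have e2: "k+1+a*j = n" using assms by (simp_all add: algebra_simps)
  have "(1+X) * (Pm a * X^(k+1) * geom a j + Pm (k+1)) = X^(k+1) * (((1+X) * Pm a) * geom a j) + (1+X) * Pm (k+1)"
    by (simp add: algebra_simps)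
  also have "\<dots> = X^(k+1) * ((1+X^a) * geom a j) + (1+X) * Pm (k+1)" by (simp only: L1)
  also have "\<dots> = X^(k+1) + X^n + 1 + X^(k+1)"
  proof -
    have "X^(k+1) * X^(a*j) = X^n" by (simp only: power_add[symmetric] e2)
    then show ?thesis by (simp add: L1 L2 distrib_left)
  qed
  also have "\<dots> = (X^(k+1) + X^(k+1)) + (1 + X^n)" by (simp add: algebra_simps)
  also have "\<dots> = (1+X) * Pm n" by (simp add: L1 selfadd)
  finally show ?thesis using nzX by simp
qed

lemma modhelper: "D = m * E \<Longrightarrow> (D + P) mod m = P mod (m::bit poly)" by simp

lemma partC:
  assumes "k = Suc j" "a = 2*k+1" "n = 2*k*k"
  defines "Q \<equiv> X * geom a k + X^(k+1) * geom a j"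
  shows "Pm n mod (1 + X^n) = (Q * Pm k + geom a k) mod (1 + X^n)"
proof -
  define m where "m = 1 + X^n"
  define D where "D = Q * Pm k + geom a k + Pm n"
  have A: "Pm a * Q = 1 + m * Pm (k+1)" using partA[OF assms(1-3)] by (simp add: Q_def m_def)
  have e1: "a*k = n + k" using assms(1-3) by (simp add: algebra_simps)
  have Pa: "Pm a = 1 + X * ((1+X) * geom 2 k)"
  proof -
    have "Pm a = Pm (1 + 2*k)" using assms(2) by simp
    also have "\<dots> = 1 + X * Pm (2*k)" by (simp only: L3) (simp add: Pm_Suc Pm_0)
    also have "Pm (2*k) = Pm 2 * geom 2 k" by (rule L4)
    also have "Pm 2 = 1 + X" by (simp add: numeral_2_eq_2 Pm_Suc Pm_0)
    finally show ?thesis .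
  qed
  have PaPn: "Pm a * Pm n = Pm n + X * m * geom 2 k"
  proof -
    have "Pm a * Pm n = Pm n + X * geom 2 k * ((1+X) * Pm n)" by (simp add: Pa algebra_simps)
    also have "\<dots> = Pm n + X * geom 2 k * m" by (simp only: L1 m_def)
    also have "\<dots> = Pm n + X * m * geom 2 k" by (simp add: algebra_simps)
    finally show ?thesis .
  qed
  have PaG: "Pm a * geom a k = Pm n + X^n * Pm k"
    by (simp add: L4[symmetric] e1 L3)
  have "Pm a * D = (Pm a * Q) * Pm k + Pm a * geom a k + Pm a * Pm n"
    by (simp add: D_def algebra_simps)
  also have "\<dots> = (1 + m * Pm (k+1)) * Pm k + (Pm n + X^n * Pm k) + (Pm n + X * m * geom 2 k)"
    by (simp only: A PaG PaPn)
  also have "\<dots> = m * (Pm (k+1) * Pm k + X * geom 2 k) + (1 + X^n) * Pm k + 2 * Pm n"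
    by (simp add: algebra_simps)
  also have "\<dots> = m * (Pm (k+1) * Pm k + X * geom 2 k + Pm k)"
    by (simp add: two_bp m_def algebra_simps)
  finally have PD: "Pm a * D = m * (Pm (k+1) * Pm k + X * geom 2 k + Pm k)" .
  have QA: "Q * (Pm a * D) = D + m * Pm (k+1) * D"
  proof -
    have "Q * (Pm a * D) = (Pm a * Q) * D" by (simp only: ac_simps)
    also have "\<dots> = D + m * Pm (k+1) * D" by (simp only: A distrib_right mult_1_left)
    finally show ?thesis .
  qed
  have "D = D + (m * Pm (k+1) * D + m * Pm (k+1) * D)" by (simp only: selfadd add_0_right)
  also have "\<dots> = Q * (Pm a * D) + m * Pm (k+1) * D" by (simp only: QA add.assoc)
  also have "\<dots> = m * (Q * (Pm (k+1) * Pm k + X * geom 2 k + Pm k) + Pm (k+1) * D)"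
    by (simp only: PD) (simp only: algebra_simps)
  finally have DD: "D = m * (Q * (Pm (k+1) * Pm k + X * geom 2 k + Pm k) + Pm (k+1) * D)" .
  have "Q * Pm k + geom a k = D + Pm n" by (simp only: D_def add.assoc selfadd add_0_right)
  then have "(Q * Pm k + geom a k) mod m = Pm n mod m" by (simp only: modhelper[OF DD])
  then show ?thesis by (simp add: m_def)
qed

lemma geom_shift: "X^c * geom a k = (\<Sum>e\<in>(\<lambda>i. c + i*a) ` {..<k}. monom 1 e)" if "a > 0"
proof -
  have inj: "inj_on (\<lambda>i. c + i*a) {..<k}" using that by (auto simp: inj_on_def)
  have "X^c * geom a k = (\<Sum>i<k. monom 1 (c + i*a))"
    by (simp add: geom_def sum_distrib_left monomX power_add)
  also have "\<dots> = (\<Sum>e\<in>(\<lambda>i. c + i*a) ` {..<k}. monom 1 e)"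
    by (simp add: sum.reindex[OF inj])
  finally show ?thesis .
qed
lemma coeff_sum_monom1: "finite S \<Longrightarrow> coeff (\<Sum>e\<in>S. monom (1::bit) e) i = (if i \<in> S then 1 else 0)"
  by (simp add: coeff_sum coeff_monom)

lemma partD:
  assumes "k = Suc j" "a = 2*k+1" "n = 2*k*k"
  defines "Q \<equiv> X * geom a k + X^(k+1) * geom a j"
  shows "card {i. coeff (Q mod (1 + X^n)) i \<noteq> 0} = k + j"
proof -
  define S1 where "S1 = (\<lambda>i. 1 + i*a) ` {..<k}"
  define S2 where "S2 = (\<lambda>i. (k+1) + i*a) ` {..<j}"
  have a0: "a > 0" using assms(2) by simp
  have inj1: "inj_on (\<lambda>i. 1 + i*a) {..<k}" using a0 by (auto simp: inj_on_def)
  have inj2: "inj_on (\<lambda>i. (k+1) + i*a) {..<j}" using a0 by (auto simp: inj_on_def)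
  have disj: "S1 \<inter> S2 = {}"
  proof (rule ccontr)
    assume "S1 \<inter> S2 \<noteq> {}"
    then obtain i1 i2 where i: "i1 < k" "i2 < j" "1 + i1*a = k+1+i2*a" unfolding S1_def S2_def by auto
    show False
    proof (cases "i1 \<le> i2")
      case True
      then have "i1*a \<le> i2*a" by (rule mult_le_mono1)
      then show False using i assms(1) by linarith
    next
      case False
      then have "(i2+1)*a \<le> i1*a" by (intro mult_le_mono1) simp
      then show False using i assms(1,2) by (simp add: algebra_simps)
    qed
  qed
  have cQ: "coeff Q i = (if i \<in> S1 \<union> S2 then 1 else 0)" for i
  proof -
    have "Q = (\<Sum>e\<in>S1. monom 1 e) + (\<Sum>e\<in>S2. monom 1 e)"
      unfolding Q_def S1_def S2_def using geom_shift[OF a0, of 1 k] geom_shift[OF a0, of "k+1" j] by simp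
    then show ?thesis using disj by (auto simp: coeff_sum_monom1 S1_def S2_def)
  qed
  have lt1: "e < n" if "e \<in> S1" for e
  proof -
    obtain i where i: "i < k" "e = 1 + i*a" using \<open>e \<in> S1\<close> S1_def by auto
    have "i*a \<le> j*a" using i assms(1) by (intro mult_le_mono1) simp
    moreover have "1 + j*a < n" using assms(1-3) by (simp add: algebra_simps)
    ultimately show ?thesis using i by linarith
  qed
  have lt2: "e < n" if "e \<in> S2" for e
  proof -
    obtain i where i: "i < j" "e = k + 1 + i*a" using \<open>e \<in> S2\<close> S2_def by auto
    have "(i+1)*a \<le> j*a" using i by (intro mult_le_mono1) simp
    moreover have "k + 1 + j*a = n" using assms(1-3) by (simp add: algebra_simps)
    ultimately show ?thesis using i a0 by (simp add: algebra_simps)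
  qed
  have n2: "n \<ge> 2" using assms(1,3) by simp
  have degm: "degree (1 + X^n :: bit poly) = n"
  proof -
    have "degree (X^n :: bit poly) = n" by (simp add: degree_linear_power)
    then show ?thesis using n2 by (subst degree_add_eq_right) auto
  qed
  have "degree Q \<le> n - 1"
    by (rule degree_le) (use lt1 lt2 cQ n2 in fastforce)
  then have "degree Q < degree (1 + X^n :: bit poly)" using degm n2 by simp
  then have "Q mod (1 + X^n) = Q" by (rule mod_poly_less)
  then have "{i. coeff (Q mod (1 + X^n)) i \<noteq> 0} = S1 \<union> S2" using cQ by auto
  moreover have "card (S1 \<union> S2) = k + j"
  proof -
    have "card S1 = k" unfolding S1_def using card_image[OF inj1] by simp
    moreover have "card S2 = j" unfolding S2_def using card_image[OF inj2] by simp
    ultimately show ?thesis using disj by (simp add: card_Un_disjoint S1_def S2_def)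
  qed
  ultimately show ?thesis by simp
qed


theorem lemma3:
  fixes d n :: nat
  assumes "d > 0" and "even d" and "n = d^2 div 2"
  defines "Q \<equiv> monom 1 1 * geom (d + 1) (d div 2)
              + monom 1 (d div 2 + 1) * geom (d + 1) (d div 2 - 1)"
  shows "(\<exists>q. (Pm (d + 1) * q) mod xn1 n = 1 mod xn1 n)
    \<and> (Pm (d + 1) * Q) mod xn1 n = 1 mod xn1 n
    \<and> wt n Q = d - 1
    \<and> Pm n mod xn1 n = (Pm (d + 1) * monom 1 (d div 2 + 1) * geom (d + 1) (d div 2 - 1)
                         + Pm (d div 2 + 1)) mod xn1 n
    \<and> Pm n mod xn1 n = (Q * Pm (d div 2) + geom (d + 1) (d div 2)) mod xn1 n"
proof -
  obtain k where dk: "d = 2*k" using assms(2) by blast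
  with assms(1) obtain j where kj: "k = Suc j" by (cases k) auto
  define a where "a = 2*k+1"
  have hd: "d div 2 = k" "d + 1 = a" "d div 2 - 1 = j" "d - 1 = k + j" "k - 1 = j" "k - Suc 0 = j" using dk kj a_def by auto
  have hn: "n = 2*k*k" using assms(3) dk by (simp add: power2_eq_square)
  have hQ: "Q = X * geom a k + X^(k+1) * geom a j" unfolding Q_def hd by (simp add: monomX)
  have A: "Pm a * Q = 1 + (1 + X^n) * Pm (k+1)" using partA[OF kj a_def hn] hQ by simp
  have P1: "(Pm (d + 1) * Q) mod xn1 n = 1 mod xn1 n"
    unfolding hd xn1_eq A by simp
  moreover have "wt n Q = d - 1"
    unfolding wt_def xn1_eq hQ hd using partD[OF kj a_def hn] by simp
  moreover have "Pm n mod xn1 n = (Pm (d + 1) * monom 1 (d div 2 + 1) * geom (d + 1) (d div 2 - 1)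
                         + Pm (d div 2 + 1)) mod xn1 n"
    unfolding hd monomX using partB[OF kj a_def hn] by simp
  moreover have "Pm n mod xn1 n = (Q * Pm (d div 2) + geom (d + 1) (d div 2)) mod xn1 n"
    unfolding hd xn1_eq hQ using partC[OF kj a_def hn] by simp
  ultimately show ?thesis by blast
qed

end
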